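(* Let $n\geq 2$. Let $SP^n(\mathbb{C})$ be the $n$-th symmetric power of $\mathbb{C}$ and $\Delta=\{\{z,\dots,z\}\mid z\in\mathbb{C}\}\subset SP^n(\mathbb{C})$ its diagonal, with $\mathbb{C}\rtimes\mathbb{C}^*$ acting on $SP^n(\mathbb{C})-\Delta$ by $z\mapsto\lambda z+\mu$ on each point. For $\mathbf{z}=\{z_1,\dots,z_n\}$ let $B(\mathbf{z})=(z_1+\dots+z_n)/n$ and let $a_0,\dots,a_{n-2}$ be the coefficients of $z^0,\dots,z^{n-2}$ in the monic polynomial $(z-z_1+B(\mathbf{z}))\cdots(z-z_n+B(\mathbf{z}))$. Then \[ \psi:\frac{SP^n(\mathbb{C})-\Delta}{\mathbb{C}\rtimes\mathbb{C}^*}\to\mathbb{P}(n,n-1,\dots,2),\qquad [\{z_1,\dots,z_n\}]\mapsto[a_0:\dots:a_{n-2}] \] is a well-defined homeomorphism.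
   Context: For positive integers $b_0,\dots,b_m$, the weighted projective space $\mathbb{P}(b_0,\dots,b_m)$ is $(\mathbb{C}^{m+1}-\{0\})/\sim$ where $(z_0,\dots,z_m)\sim(t^{b_0}z_0,\dots,t^{b_m}z_m)$ for $t\in\mathbb{C}^*$. Thus in $\mathbb{P}(n,n-1,\dots,2)$ the coordinate $a_k$ has weight $n-k$. *)

theory Defs
  imports "HOL-Analysis.Analysis" "HOL-Library.Multiset" "HOL-Computational_Algebra.Polynomial"
begin

definition quotient_topology :: "'a topology \<Rightarrow> ('a \<Rightarrow> 'b) \<Rightarrow> 'b topology" where
  "quotient_topology X f =
     topology (\<lambda>U. U \<subseteq> f ` topspace X \<and> openin X {x \<in> topspace X. f x \<in> U})"

lemma istopology_quotient:
  "istopology (\<lambda>U. U \<subseteq> f ` topspace X \<and> openin X {x \<in> topspace X. f x \<in> U})"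
proof -
  have 1: "{x \<in> topspace X. f x \<in> S \<inter> T} = {x \<in> topspace X. f x \<in> S} \<inter> {x \<in> topspace X. f x \<in> T}" for S T by blast
  have 2: "{x \<in> topspace X. f x \<in> \<Union>K} = \<Union>((\<lambda>S. {x \<in> topspace X. f x \<in> S}) ` K)" for K by blast
  show ?thesis unfolding istopology_def 1 2 by (auto intro!: openin_Int openin_Union)
qed

lemma openin_quotient_topology:
  "openin (quotient_topology X f) U \<longleftrightarrow>
     U \<subseteq> f ` topspace X \<and> openin X {x \<in> topspace X. f x \<in> U}"
  unfolding quotient_topology_def by (simp add: istopology_quotient)

text \<open>Points of C^n as functions on {..<n} (product topology); SP^n(C) as multisets of size n.\<close>
definition Cn :: "nat \<Rightarrow> (nat \<Rightarrow> complex) topology" where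
  "Cn n = product_topology (\<lambda>_. euclidean) {..<n}"

definition mset_of :: "nat \<Rightarrow> (nat \<Rightarrow> complex) \<Rightarrow> complex multiset" where
  "mset_of n z = mset (map z [0..<n])"

definition SP :: "nat \<Rightarrow> complex multiset topology" where
  "SP n = quotient_topology (Cn n) (mset_of n)"

definition diagonal :: "nat \<Rightarrow> complex multiset set" where
  "diagonal n = {replicate_mset n c | c. True}"

definition SP_minus_diag :: "nat \<Rightarrow> complex multiset topology" where
  "SP_minus_diag n = subtopology (SP n) (topspace (SP n) - diagonal n)"

definition aff_orbit :: "complex multiset \<Rightarrow> complex multiset set" where
  "aff_orbit m = {image_mset (\<lambda>x. l * x + u) m | l u. l \<noteq> 0}"

definition SP_orbits :: "nat \<Rightarrow> complex multiset set topology" where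
  "SP_orbits n = quotient_topology (SP_minus_diag n) aff_orbit"

text \<open>Weighted projective space P(w 0, ..., w (N-1)): (C^N - 0)/C^*.\<close>
definition wclass :: "(nat \<Rightarrow> nat) \<Rightarrow> nat \<Rightarrow> (nat \<Rightarrow> complex) \<Rightarrow> (nat \<Rightarrow> complex) set" where
  "wclass w N a = {restrict (\<lambda>k. t ^ w k * a k) {..<N} | t. t \<noteq> 0}"

definition wproj :: "(nat \<Rightarrow> nat) \<Rightarrow> nat \<Rightarrow> (nat \<Rightarrow> complex) set topology" where
  "wproj w N = quotient_topology
      (subtopology (Cn N) (topspace (Cn N) - {restrict (\<lambda>_. 0) {..<N}})) (wclass w N)"

definition bary :: "nat \<Rightarrow> complex multiset \<Rightarrow> complex" where
  "bary n m = sum_mset m / of_nat n"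

definition centred_poly :: "nat \<Rightarrow> complex multiset \<Rightarrow> complex poly" where
  "centred_poly n m = (\<Prod>x\<in>#m. [:bary n m - x, 1:])"

definition coefvec :: "nat \<Rightarrow> complex multiset \<Rightarrow> nat \<Rightarrow> complex" where
  "coefvec n m = restrict (\<lambda>k. coeff (centred_poly n m) k) {..<n - 1}"

end

theory Submission
  imports Defs "HOL-Computational_Algebra.Fundamental_Theorem_Algebra"
begin

lemma lin_nz: "[:a, 1:] \<noteq> (0::complex poly)" by simp

lemma prod_lin_nz: "(\<Prod>x\<in>#M. [:c x, 1:]) \<noteq> (0::complex poly)"
  by (auto simp add: prod_mset_zero_iff)

lemma prod_lin_add: "(\<Prod>x\<in>#add_mset y M. [:c x, 1:]) = [:c y, 1:] * (\<Prod>x\<in>#M. [:c x, 1:]::complex poly)"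
  by (simp only: image_mset_add_mset prod_mset.add_mset)

lemma degree_prod_lin: "degree (\<Prod>x\<in>#M. [:c x, 1:]::complex poly) = size M"
proof (induction M)
  case (add x M)
  then show ?case using prod_lin_nz[of c M] by (simp add: degree_mult_eq prod_lin_add del: mult_pCons_left)
qed simp

lemma lin_mult: "[:a, 1:] * p = smult a p + pCons 0 (p::complex poly)"
  by (simp add: algebra_simps)

lemma coeff_lin_mult: "coeff ([:a, 1:] * p) k = a * coeff p k + (case k of 0 \<Rightarrow> 0 | Suc j \<Rightarrow> coeff (p::complex poly) j)"
  unfolding lin_mult by (cases k) auto

lemma coeff_scale:
  "coeff (\<Prod>x\<in>#M. [:l * c x, 1:]) k = l ^ (size M - k) * coeff (\<Prod>x\<in>#M. [:c x, 1:]::complex poly) k"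
proof (induction M arbitrary: k)
  case empty
  then show ?case by (cases k) auto
next
  case (add x M)
  show ?case
  proof (cases "k \<le> size M")
    case True
    show ?thesis
    proof (cases k)
      case 0
      then show ?thesis using add by (simp add: coeff_lin_mult prod_lin_add del: mult_pCons_left)
    next
      case (Suc j)
      have "size M - j = Suc (size M - k)" using True Suc by simp
      then show ?thesis using add Suc True by (simp add: coeff_lin_mult prod_lin_add algebra_simps del: mult_pCons_left)
    qed
  next
    case False
    have d1: "degree (\<Prod>x\<in>#M. [:l * c x, 1:]::complex poly) = size M" by (rule degree_prod_lin)
    have d2: "degree (\<Prod>x\<in>#M. [:c x, 1:]::complex poly) = size M" by (rule degree_prod_lin)
    have d3: "degree (\<Prod>x\<in>#add_mset x M. [:l * c x, 1:]::complex poly) = Suc (size M)" using degree_prod_lin by (metis size_add_mset)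
    have d4: "degree (\<Prod>x\<in>#add_mset x M. [:c x, 1:]::complex poly) = Suc (size M)" using degree_prod_lin by (metis size_add_mset)
    show ?thesis
    proof (cases "k = Suc (size M)")
      case True
      then obtain j where "k = Suc j" "j = size M" by auto
      then show ?thesis using add.IH[of "size M"] coeff_eq_0[of "(\<Prod>x\<in>#M. [:l * c x, 1:]::complex poly)" k] coeff_eq_0[of "(\<Prod>x\<in>#M. [:c x, 1:]::complex poly)" k] d1 d2
        by (simp add: coeff_lin_mult prod_lin_add del: mult_pCons_left)
    next
      case False
      with \<open>\<not> k \<le> size M\<close> have "k > Suc (size M)" by simp
      then show ?thesis using coeff_eq_0 d3 d4 by (metis mult_zero_right)
    qed
  qed
qed

lemma proots_prod_lin: "proots (\<Prod>x\<in>#M. [:- x, 1:]) = (M::complex multiset)"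
proof (induction M)
  case (add x M)
  then show ?case using prod_lin_nz[of "\<lambda>x. -x" M] by (simp add: proots_mult prod_lin_add[of "\<lambda>x. -x"] del: mult_pCons_left)
qed simp



lemma coeff_prod_lin_top: "coeff (\<Prod>x\<in>#M. [:c x, 1:]::complex poly) (size M) = 1"
proof (induction M)
  case (add x M)
  have "coeff (\<Prod>x\<in>#M. [:c x, 1:]::complex poly) (Suc (size M)) = 0"
    by (rule coeff_eq_0) (simp add: degree_prod_lin)
  then show ?case using add by (simp add: coeff_lin_mult prod_lin_add del: mult_pCons_left)
qed simp

lemma coeff_prod_lin_sub:
  "coeff (\<Prod>x\<in>#add_mset y M. [:c x, 1:]::complex poly) (size M) = c y + (\<Sum>x\<in>#M. c x)"
proof (induction M arbitrary: y)
  case empty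
  then show ?case by simp
next
  case (add x M)
  have "coeff (\<Prod>x\<in>#add_mset y (add_mset x M). [:c x, 1:]::complex poly) (size (add_mset x M))
     = coeff ([:c y, 1:] * (\<Prod>x\<in>#add_mset x M. [:c x, 1:])) (Suc (size M))"
    by (simp only: prod_lin_add size_add_mset)
  also have "\<dots> = c y * 1 + (c x + (\<Sum>x\<in>#M. c x))"
    using add.IH[of x] coeff_prod_lin_top[of c "add_mset x M"] by (simp add: coeff_lin_mult del: mult_pCons_left)
  finally show ?case by simp
qed



definition act :: "(nat \<Rightarrow> nat) \<Rightarrow> nat \<Rightarrow> complex \<Rightarrow> (nat \<Rightarrow> complex) \<Rightarrow> nat \<Rightarrow> complex" where
  "act w N t a = restrict (\<lambda>k. t ^ w k * a k) {..<N}"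

lemma wclass_alt: "wclass w N a = {act w N t a | t. t \<noteq> 0}"
  unfolding wclass_def act_def by simp

lemma act_act: "act w N s (act w N t a) = act w N (s * t) a"
  unfolding act_def by (auto simp: power_mult_distrib)

lemma act_one: "a \<in> extensional {..<N} \<Longrightarrow> act w N 1 a = a"
  unfolding act_def by (auto simp: extensional_def)

lemma act_ext: "act w N t a \<in> extensional {..<N}"
  unfolding act_def by simp

lemma wclass_act: "t \<noteq> 0 \<Longrightarrow> wclass w N (act w N t a) = wclass w N a"
proof -
  assume t: "t \<noteq> 0"
  show ?thesis unfolding wclass_alt
  proof (intro set_eqI iffI)
    fix x assume "x \<in> {act w N s (act w N t a) |s. s \<noteq> 0}"
    then obtain s where s: "s \<noteq> 0" and x: "x = act w N s (act w N t a)" by blast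
    have x2: "x = act w N (s * t) a" unfolding x act_act ..
    have st: "s * t \<noteq> 0" using s t by simp
    show "x \<in> {act w N s a |s. s \<noteq> 0}" by (rule CollectI, rule exI, rule conjI[OF x2 st])
  next
    fix x assume "x \<in> {act w N s a |s. s \<noteq> 0}"
    then obtain s where s: "s \<noteq> 0" and x: "x = act w N s a" by blast
    have "s = (s / t) * t" using t by simp
    then have x2: "x = act w N (s / t) (act w N t a)" unfolding x act_act by metis
    have st: "s / t \<noteq> 0" using s t by simp
    show "x \<in> {act w N s (act w N t a) |s. s \<noteq> 0}" by (rule CollectI, rule exI, rule conjI[OF x2 st])
  qed
qed

lemma in_wclass: "a \<in> extensional {..<N} \<Longrightarrow> a \<in> wclass w N a"
proof -
  assume "a \<in> extensional {..<N}"
  then have e: "a = act w N 1 a" using act_one by metis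
  show ?thesis unfolding wclass_alt by (rule CollectI, rule exI, rule conjI[OF e one_neq_zero])
qed

lemma wclass_eq_iff:
  assumes "a \<in> extensional {..<N}" "b \<in> extensional {..<N}"
  shows "wclass w N a = wclass w N b \<longleftrightarrow> (\<exists>t. t \<noteq> 0 \<and> b = act w N t a)"
proof
  assume "wclass w N a = wclass w N b"
  then have "b \<in> wclass w N a" using in_wclass[OF assms(2)] by simp
  then show "\<exists>t. t \<noteq> 0 \<and> b = act w N t a" unfolding wclass_alt by blast
next
  assume "\<exists>t. t \<noteq> 0 \<and> b = act w N t a"
  then obtain t where "t \<noteq> 0" "b = act w N t a" by blast
  then show "wclass w N a = wclass w N b" by (simp add: wclass_act)
qed

lemma sum_mset_aff: "sum_mset (image_mset (\<lambda>x. l * x + u) m) = l * sum_mset m + of_nat (size m) * (u::complex)"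
  by (induction m) (auto simp: algebra_simps)

lemma bary_aff: "size m = n \<Longrightarrow> n > 0 \<Longrightarrow> bary n (image_mset (\<lambda>x. l * x + u) m) = l * bary n m + u"
  unfolding bary_def sum_mset_aff by (simp add: field_simps)

lemma centred_aff: "size m = n \<Longrightarrow> n > 0 \<Longrightarrow>
   centred_poly n (image_mset (\<lambda>x. l * x + u) m) = (\<Prod>x\<in>#m. [: l * (bary n m - x), 1:])"
  unfolding centred_poly_def using bary_aff[of m n l u]
  by (simp add: image_mset.compositionality o_def algebra_simps)

lemma coefvec_aff: "size m = n \<Longrightarrow> n > 0 \<Longrightarrow>
   coefvec n (image_mset (\<lambda>x. l * x + u) m) = act (\<lambda>k. n - k) (n - 1) l (coefvec n m)"
proof -
  assume a: "size m = n" "n > 0"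
  have "coeff (centred_poly n (image_mset (\<lambda>x. l * x + u) m)) k = l ^ (n - k) * coeff (centred_poly n m) k" for k
  proof -
    have "centred_poly n (image_mset (\<lambda>x. l * x + u) m) = (\<Prod>x\<in>#m. [: l * (bary n m - x), 1:])"
      by (rule centred_aff[OF a])
    then show ?thesis unfolding centred_poly_def using coeff_scale[of l "\<lambda>x. bary n m - x" m k] a by simp
  qed
  then show ?thesis unfolding coefvec_def act_def by auto
qed

lemma centred_alt: "centred_poly n m = (\<Prod>x\<in>#image_mset (\<lambda>x. x - bary n m) m. [:- x, 1:])"
  unfolding centred_poly_def by (simp add: image_mset.compositionality o_def)

lemma sum_centred: "size m = n \<Longrightarrow> n > 0 \<Longrightarrow> sum_mset (image_mset (\<lambda>x. x - bary n m) m) = 0"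
  using sum_mset_aff[of 1 "- bary n m" m] unfolding bary_def by simp

lemma sumneg: "(\<Sum>x\<in>#M. - x) = - sum_mset (M::complex multiset)"
  by (induction M) auto

lemma coeff_centred:
  assumes "size m = n" "n \<ge> 2"
  shows "coeff (centred_poly n m) k =
    (if k = n then 1 else if k = n - 1 then 0 else if k < n - 1 then coefvec n m k else 0)"
proof -
  define cm where "cm = image_mset (\<lambda>x. x - bary n m) m"
  have scm: "size cm = n" using assms cm_def by simp
  have cp: "centred_poly n m = (\<Prod>x\<in>#cm. [:- x, 1:])" by (simp add: centred_alt cm_def)
  show ?thesis
  proof (cases "k = n")
    case True then show ?thesis using coeff_prod_lin_top[of "\<lambda>x. -x" cm] scm cp by simp
  next
    case kn: False
    show ?thesis
    proof (cases "k = n - 1")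
      case True
      have "cm \<noteq> {#}" using scm assms by auto
      then obtain y M where cmy: "cm = add_mset y M" by (meson multiset_cases)
      have "sum_mset cm = 0" using sum_centred[of m n] assms cm_def by simp
      then have h: "y + sum_mset M = 0" using cmy by simp
      have "- y + (\<Sum>x\<in>#M. - x) = - (y + sum_mset M)" by (simp add: sumneg)
      then have "- y + (\<Sum>x\<in>#M. - x) = 0" using h by simp
      moreover have "size M = n - 1" using cmy scm by simp
      ultimately show ?thesis using coeff_prod_lin_sub[of "\<lambda>x. -x" y M] cp cmy True assms by simp
    next
      case False
      show ?thesis
      proof (cases "k < n - 1")
        case True then show ?thesis using kn False by (simp add: coefvec_def)
      next
        case False
        then have "k > n" using kn \<open>k \<noteq> n - 1\<close> by simp
        moreover have "degree (centred_poly n m) = n" using cp scm degree_prod_lin[of "\<lambda>x. -x" cm] by simp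
        ultimately have "coeff (centred_poly n m) k = 0" by (intro coeff_eq_0) simp
        then show ?thesis using kn False \<open>k \<noteq> n - 1\<close> by simp
      qed
    qed
  qed
qed

lemma aff_comp: "image_mset (\<lambda>x. l' * x + u') (image_mset (\<lambda>x. l * x + u) m)
   = image_mset (\<lambda>x. (l' * l) * x + (l' * u + u')) (m::complex multiset)"
  by (simp add: image_mset.compositionality o_def algebra_simps)

lemma self_in_orbit: "m \<in> aff_orbit m"
  unfolding aff_orbit_def by (rule CollectI, rule exI[of _ 1], rule exI[of _ 0]) simp

lemma aff_orbit_image:
  assumes "l \<noteq> 0"
  shows "aff_orbit (image_mset (\<lambda>x. l * x + u) m) = aff_orbit m"
proof -
  have inv: "m = image_mset (\<lambda>x. (1/l) * x + (- u / l)) (image_mset (\<lambda>x. l * x + u) m)"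
  proof -
    have "(\<lambda>x. ((1/l) * l) * x + ((1/l) * u + (- u / l))) = (\<lambda>x. x)" using assms by (auto simp: field_simps)
    then show ?thesis by (simp only: aff_comp image_mset.identity id_apply)
  qed
  show ?thesis unfolding aff_orbit_def
  proof (intro set_eqI iffI)
    fix m' assume "m' \<in> {image_mset (\<lambda>x. l' * x + u') (image_mset (\<lambda>x. l * x + u) m) |l' u'. l' \<noteq> 0}"
    then obtain l' u' where l': "l' \<noteq> 0" and eq: "m' = image_mset (\<lambda>x. (l' * l) * x + (l' * u + u')) m"
      by (auto simp: aff_comp)
    have nz2: "l' * l \<noteq> 0" using l' assms by simp
    show "m' \<in> {image_mset (\<lambda>x. l * x + u) m |l u. l \<noteq> 0}"
      by (rule CollectI, rule exI, rule exI, rule conjI[OF eq nz2])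
  next
    fix m' assume "m' \<in> {image_mset (\<lambda>x. l * x + u) m |l u. l \<noteq> 0}"
    then obtain l' u' where "l' \<noteq> 0" and eq: "m' = image_mset (\<lambda>x. l' * x + u') m" by auto
    have e: "(\<lambda>x. (l'/l * l) * x + (l'/l * u + (u' - l' * u / l))) = (\<lambda>x. l' * x + u')"
      using assms by (intro ext) (simp add: field_simps)
    have m'eq: "m' = image_mset (\<lambda>x. (l'/l) * x + (u' - l' * u / l)) (image_mset (\<lambda>x. l * x + u) m)"
      unfolding eq aff_comp e ..
    have nz: "l'/l \<noteq> 0" using assms \<open>l' \<noteq> 0\<close> by simp
    show "m' \<in> {image_mset (\<lambda>x. l' * x + u') (image_mset (\<lambda>x. l * x + u) m) |l' u'. l' \<noteq> 0}"
      by (rule CollectI, rule exI, rule exI, rule conjI[OF m'eq nz])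
  qed
qed

lemma orbit_eq_iff: "aff_orbit m = aff_orbit m' \<longleftrightarrow> (\<exists>l u. l \<noteq> 0 \<and> m' = image_mset (\<lambda>x. l * x + u) m)"
proof
  assume "aff_orbit m = aff_orbit m'"
  then have "m' \<in> aff_orbit m" using self_in_orbit[of m'] by simp
  then show "\<exists>l u. l \<noteq> 0 \<and> m' = image_mset (\<lambda>x. l * x + u) m" unfolding aff_orbit_def by blast
next
  assume "\<exists>l u. l \<noteq> 0 \<and> m' = image_mset (\<lambda>x. l * x + u) m"
  then obtain l u where "l \<noteq> 0" "m' = image_mset (\<lambda>x. l * x + u) m" by blast
  then show "aff_orbit m = aff_orbit m'" by (simp add: aff_orbit_image)
qed

lemma topspace_quotient: "topspace (quotient_topology X f) = f ` topspace X"
proof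
  show "topspace (quotient_topology X f) \<subseteq> f ` topspace X"
    by (metis openin_quotient_topology openin_topspace)
  have "openin (quotient_topology X f) (f ` topspace X)"
    by (auto simp: openin_quotient_topology
         intro: ssubst[of "{x \<in> topspace X. f x \<in> f ` topspace X}" "topspace X" "openin X"])
  then show "f ` topspace X \<subseteq> topspace (quotient_topology X f)"
    by (rule openin_subset)
qed

lemma continuous_map_quotient_into: "continuous_map X (quotient_topology X f) f"
  unfolding continuous_map_def topspace_quotient
proof (intro conjI allI impI)
  fix U assume "openin (quotient_topology X f) U"
  then show "openin X {x \<in> topspace X. f x \<in> U}" by (simp add: openin_quotient_topology)
qed auto

lemma continuous_map_quotient_from:
  assumes "continuous_map X Y (\<lambda>x. g (f x))"
  shows "continuous_map (quotient_topology X f) Y g"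
  unfolding continuous_map_def topspace_quotient
proof (intro conjI allI impI)
  show "g \<in> f ` topspace X \<rightarrow> topspace Y" using assms by (auto simp: continuous_map_def)
  fix U assume U: "openin Y U"
  have "{x \<in> topspace X. f x \<in> {x \<in> f ` topspace X. g x \<in> U}} = {x \<in> topspace X. g (f x) \<in> U}"
    by auto
  moreover have "openin X {x \<in> topspace X. g (f x) \<in> U}"
    using assms U by (simp add: continuous_map_def)
  ultimately show "openin (quotient_topology X f) {x \<in> f ` topspace X. g x \<in> U}"
    by (simp add: openin_quotient_topology)
qed

lemma continuous_map_quotient_sub_from:
  assumes D: "openin (quotient_topology X f) D"
    and c: "continuous_map (subtopology X {x\<in>topspace X. f x \<in> D}) Y (\<lambda>x. g (f x))"
  shows "continuous_map (subtopology (quotient_topology X f) D) Y g"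
proof -
  have Dsub: "D \<subseteq> f ` topspace X" using D by (simp add: openin_quotient_topology)
  have D': "openin X {x\<in>topspace X. f x \<in> D}" using D by (simp add: openin_quotient_topology)
  have ts: "topspace (subtopology (quotient_topology X f) D) = D"
    using Dsub by (simp add: topspace_quotient Int_absorb1)
  show ?thesis
    unfolding continuous_map_def ts
  proof (intro conjI allI impI)
    show "g \<in> D \<rightarrow> topspace Y" using c Dsub by (auto simp: continuous_map_def)
    fix U assume U: "openin Y U"
    have "openin (subtopology X {x\<in>topspace X. f x \<in> D}) {x \<in> topspace X \<inter> {x\<in>topspace X. f x \<in> D}. g (f x) \<in> U}"
      using c U by (simp add: continuous_map_def)
    then have o: "openin X {x \<in> topspace X \<inter> {x\<in>topspace X. f x \<in> D}. g (f x) \<in> U}"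
      using D' openin_trans_full by blast
    have "{x \<in> topspace X. f x \<in> {x \<in> D. g x \<in> U}} = {x \<in> topspace X \<inter> {x\<in>topspace X. f x \<in> D}. g (f x) \<in> U}"
      by auto
    then have "openin (quotient_topology X f) {x \<in> D. g x \<in> U}"
      using o Dsub by (auto simp: openin_quotient_topology)
    then show "openin (subtopology (quotient_topology X f) D) {x \<in> D. g x \<in> U}"
      using D by (simp add: openin_open_subtopology)
  qed
qed

lemma topspace_Cn: "topspace (Cn n) = PiE {..<n} (\<lambda>_. UNIV)"
  unfolding Cn_def by simp

lemma mset_of_image: "mset_of n z = image_mset z (mset_set {..<n})"
  unfolding mset_of_def by (simp add: mset_map mset_upt atLeast0LessThan)

lemma size_mset_of [simp]: "size (mset_of n z) = n"
  unfolding mset_of_def by simp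

lemma sum_mset_of: "sum_mset (mset_of n z) = (\<Sum>i<n. z i)"
  unfolding mset_of_image by (simp add: sum_unfold_sum_mset)

lemma centred_mset_of: "centred_poly n (mset_of n z) = (\<Prod>i<n. [: bary n (mset_of n z) - z i, 1:])"
  unfolding centred_poly_def
  by (subst (2) mset_of_image) (simp add: prod_unfold_prod_mset image_mset.compositionality o_def)

lemma bary_mset_of: "bary n (mset_of n z) = (\<Sum>i<n. z i) / of_nat n"
  unfolding bary_def sum_mset_of ..

lemma topspace_SP: "topspace (SP n) = mset_of n ` PiE {..<n} (\<lambda>_. UNIV)"
  unfolding SP_def topspace_quotient topspace_Cn ..

lemma mset_in_SP:
  assumes "size M = n"
  shows "M \<in> topspace (SP n)"
proof -
  obtain xs where xs: "mset xs = M" using ex_mset by blast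
  have len: "length xs = n" using xs assms by auto
  define z where "z = restrict (\<lambda>i. xs ! i) {..<n}"
  have "map z [0..<n] = xs" unfolding z_def using len by (intro nth_equalityI) auto
  then have "mset_of n z = M" unfolding mset_of_def using xs by simp
  moreover have "z \<in> PiE {..<n} (\<lambda>_. UNIV)" unfolding z_def by simp
  ultimately show ?thesis unfolding topspace_SP by blast
qed

lemma mset_of_repl: "mset_of n z = replicate_mset n c \<longleftrightarrow> (\<forall>i<n. z i = c)"
proof
  assume h: "mset_of n z = replicate_mset n c"
  show "\<forall>i<n. z i = c"
  proof (intro allI impI)
    fix i assume "i < n"
    then have "z i \<in># mset_of n z" unfolding mset_of_def by simp
    then show "z i = c" using h \<open>i < n\<close> by (simp split: if_splits)
  qed
next
  assume h: "\<forall>i<n. z i = c"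
  have "map z [0..<n] = replicate n c" using h by (intro nth_equalityI) auto
  then show "mset_of n z = replicate_mset n c" unfolding mset_of_def by simp
qed

lemma in_diag_iff: "n > 0 \<Longrightarrow> mset_of n z \<in> diagonal n \<longleftrightarrow> (\<forall>i<n. z i = z 0)"
  unfolding diagonal_def using mset_of_repl by (auto simp: mset_of_repl)

definition DD :: "nat \<Rightarrow> complex multiset set" where
  "DD n = topspace (SP n) - diagonal n"

lemma preimage_DD: "n > 0 \<Longrightarrow>
   {z \<in> topspace (Cn n). mset_of n z \<in> DD n} = (\<Union>i\<in>{..<n}. {z \<in> topspace (Cn n). z i - z 0 \<in> - {0}})"
  unfolding DD_def using in_diag_iff[of n] by (auto simp: topspace_SP topspace_Cn)

lemma cont_proj: "i < n \<Longrightarrow> continuous_map (Cn n) euclidean (\<lambda>z. z i)"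
  unfolding Cn_def using continuous_map_product_projection[of i "{..<n}" "\<lambda>_. euclidean"] by simp

lemma openin_preimage_DD: "n > 0 \<Longrightarrow> openin (Cn n) {z \<in> topspace (Cn n). mset_of n z \<in> DD n}"
  unfolding preimage_DD
proof (intro openin_Union ballI, elim imageE)
  fix S i assume S: "S = {z \<in> topspace (Cn n). z i - z 0 \<in> - {0}}" and i: "i \<in> {..<n}" and n: "n > 0"
  have c: "continuous_map (Cn n) euclidean (\<lambda>z. z i - z 0)"
    using i n by (intro continuous_map_diff cont_proj) auto
  have "open (-{0::complex})" by (simp add: open_Compl)
  then have o: "openin euclidean (-{0::complex})" by (metis open_openin)
  show "openin (Cn n) S" unfolding S using openin_continuous_map_preimage[OF c o] .
qed

lemma openin_DD: "n > 0 \<Longrightarrow> openin (SP n) (DD n)"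
  unfolding SP_def openin_quotient_topology
  using openin_preimage_DD[of n] by (auto simp: DD_def SP_def topspace_quotient)

lemma topspace_X: "topspace (SP_minus_diag n) = DD n"
  unfolding SP_minus_diag_def DD_def by auto

lemma X_alt: "SP_minus_diag n = subtopology (SP n) (DD n)"
  unfolding SP_minus_diag_def DD_def ..

lemma cmult: "continuous_map X euclidean f \<Longrightarrow> continuous_map X euclidean g \<Longrightarrow>
   continuous_map X euclidean (\<lambda>x. f x * g x :: 'a::real_normed_algebra)"
  by (simp add: continuous_map_atin tendsto_mult)

lemma cont_coeff_prod:
  fixes m :: nat
  assumes "\<And>i. i < m \<Longrightarrow> continuous_map X euclidean (f i)"
  shows "continuous_map X euclidean (\<lambda>x. coeff (\<Prod>i<m. [:f i x, 1:]::complex poly) k)"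
  using assms
proof (induction m arbitrary: k)
  case 0
  show ?case by simp
next
  case (Suc m)
  have eq: "(\<Prod>i<Suc m. [:f i x, 1:]::complex poly) = [:f m x, 1:] * (\<Prod>i<m. [:f i x, 1:])" for x
    by (simp only: prod.lessThan_Suc mult.commute)
  have IH: "continuous_map X euclidean (\<lambda>x. coeff (\<Prod>i<m. [:f i x, 1:]::complex poly) j)" for j
    by (rule Suc.IH) (simp add: Suc.prems)
  have fm: "continuous_map X euclidean (f m)" by (rule Suc.prems) simp
  show ?case
  proof (cases k)
    case 0
    then show ?thesis unfolding eq coeff_lin_mult using cmult[OF fm IH] by simp
  next
    case (Suc j)
    then show ?thesis unfolding eq coeff_lin_mult using cmult[OF fm IH] IH
      by (simp add: continuous_map_add)
  qed
qed

lemma cont_coef_mset: "continuous_map (Cn n) euclidean (\<lambda>z. coeff (centred_poly n (mset_of n z)) k)"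
proof -
  have s: "continuous_map (Cn n) euclidean (\<lambda>z. (\<Sum>j<n. z j))"
    by (intro continuous_map_sum cont_proj) auto
  have "continuous_map (Cn n) euclidean (\<lambda>z. (\<Sum>j<n. z j) * inverse (of_nat n) - z i)" if "i < n" for i
    using that by (intro continuous_map_diff cmult s cont_proj) auto
  then have "continuous_map (Cn n) euclidean (\<lambda>z. coeff (\<Prod>i<n. [:(\<Sum>j<n. z j) * inverse (of_nat n) - z i, 1:]::complex poly) k)"
    by (intro cont_coeff_prod)
  then show ?thesis unfolding centred_mset_of bary_mset_of by (simp add: divide_inverse)
qed

lemma cont_coefvec: "continuous_map (Cn n) (Cn (n - 1)) (\<lambda>z. coefvec n (mset_of n z))"
  unfolding Cn_def[of "n - 1"] continuous_map_componentwise
proof (intro conjI ballI)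
  show "(\<lambda>z. coefvec n (mset_of n z)) ` topspace (Cn n) \<subseteq> extensional {..<n - 1}"
    unfolding coefvec_def by auto
  fix k assume "k \<in> {..<n - 1}"
  then have "coefvec n (mset_of n z) k = coeff (centred_poly n (mset_of n z)) k" for z
    unfolding coefvec_def by simp
  then show "continuous_map (Cn n) euclidean (\<lambda>z. coefvec n (mset_of n z) k)"
    using cont_coef_mset by simp
qed

lemma size_of_SP: "m \<in> topspace (SP n) \<Longrightarrow> size m = n"
  unfolding topspace_SP by (elim imageE) simp

lemma prod_repl0: "(\<Prod>x\<in>#replicate_mset n 0. [:- x, 1:]) = ([:0, 1:] ^ n :: complex poly)"
  by simp

lemma recentre: "image_mset (\<lambda>x. x + c) (image_mset (\<lambda>x. x - c) m) = (m::complex multiset)"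
  by (simp add: image_mset.compositionality o_def)

lemma coefvec_nz:
  assumes n: "n \<ge> 2" and m: "m \<in> DD n"
  shows "coefvec n m \<noteq> restrict (\<lambda>_. 0) {..<n - 1}"
proof
  assume h: "coefvec n m = restrict (\<lambda>_. 0) {..<n - 1}"
  have sz: "size m = n" using m size_of_SP unfolding DD_def by auto
  have cf: "coeff (centred_poly n m) k = coeff ([:0, 1:] ^ n) k" for k
  proof -
    have "coeff ([:0, 1:] ^ n :: complex poly) k = coeff (monom 1 n) k" by (simp add: monom_altdef)
    also have "\<dots> = (if k = n then 1 else 0)" by (simp add: coeff_monom)
    finally show ?thesis using coeff_centred[OF sz n, of k] h
      by (auto simp: fun_eq_iff split: if_splits)
  qed
  have "centred_poly n m = [:0, 1:] ^ n" by (rule poly_eqI[OF cf])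
  then have "(\<Prod>x\<in>#image_mset (\<lambda>x. x - bary n m) m. [:- x, 1:]) = (\<Prod>x\<in>#replicate_mset n 0. [:- x, 1:])"
    unfolding centred_alt prod_repl0 .
  then have "image_mset (\<lambda>x. x - bary n m) m = replicate_mset n 0"
    by (metis proots_prod_lin)
  then have "m = replicate_mset n (bary n m)"
    using recentre[of "bary n m" m] by simp
  then have "m \<in> diagonal n" unfolding diagonal_def by blast
  then show False using m unfolding DD_def by simp
qed

definition ZZ :: "nat \<Rightarrow> (nat \<Rightarrow> complex) topology" where
  "ZZ n = subtopology (Cn (n - 1)) (topspace (Cn (n - 1)) - {restrict (\<lambda>_. 0) {..<n - 1}})"

lemma wproj_alt: "wproj (\<lambda>k. n - k) (n - 1) = quotient_topology (ZZ n) (wclass (\<lambda>k. n - k) (n - 1))"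
  unfolding wproj_def ZZ_def ..

lemma topspace_ZZ: "topspace (ZZ n) = PiE {..<n - 1} (\<lambda>_. UNIV) - {restrict (\<lambda>_. 0) {..<n - 1}}"
  unfolding ZZ_def by (auto simp: topspace_Cn)

lemma coefvec_in_ZZ: "n \<ge> 2 \<Longrightarrow> m \<in> DD n \<Longrightarrow> coefvec n m \<in> topspace (ZZ n)"
  unfolding topspace_ZZ using coefvec_nz[of n m] by (simp add: coefvec_def)

definition FF :: "nat \<Rightarrow> complex multiset \<Rightarrow> (nat \<Rightarrow> complex) set" where
  "FF n m = wclass (\<lambda>k. n - k) (n - 1) (coefvec n m)"

lemma cont_FF:
  assumes n: "n \<ge> 2"
  shows "continuous_map (SP_minus_diag n) (wproj (\<lambda>k. n - k) (n - 1)) (FF n)"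
proof -
  have n0: "n > 0" using n by simp
  have c1: "continuous_map (subtopology (Cn n) {z \<in> topspace (Cn n). mset_of n z \<in> DD n}) (ZZ n)
             (\<lambda>z. coefvec n (mset_of n z))"
    unfolding ZZ_def
  proof (rule continuous_map_into_subtopology)
    show "continuous_map (subtopology (Cn n) {z \<in> topspace (Cn n). mset_of n z \<in> DD n}) (Cn (n - 1)) (\<lambda>z. coefvec n (mset_of n z))"
      by (rule continuous_map_from_subtopology[OF cont_coefvec])
    show "(\<lambda>z. coefvec n (mset_of n z)) \<in> topspace (subtopology (Cn n) {z \<in> topspace (Cn n). mset_of n z \<in> DD n})
       \<rightarrow> topspace (Cn (n - 1)) - {restrict (\<lambda>_. 0) {..<n - 1}}"
      using coefvec_in_ZZ[OF n] unfolding topspace_ZZ by (auto simp: topspace_Cn)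
  qed
  have c2: "continuous_map (subtopology (Cn n) {z \<in> topspace (Cn n). mset_of n z \<in> DD n}) (wproj (\<lambda>k. n - k) (n - 1))
             (\<lambda>z. FF n (mset_of n z))"
    using continuous_map_compose[OF c1 continuous_map_quotient_into[of "ZZ n" "wclass (\<lambda>k. n - k) (n - 1)"]]
    unfolding wproj_alt FF_def o_def .
  show ?thesis
    unfolding X_alt SP_def
    by (rule continuous_map_quotient_sub_from[OF openin_DD[OF n0, unfolded SP_def] c2])
qed

definition psi :: "nat \<Rightarrow> complex multiset set \<Rightarrow> (nat \<Rightarrow> complex) set" where
  "psi n Orb = FF n (SOME m. m \<in> DD n \<and> aff_orbit m = Orb)"

lemma FF_aff: "n > 0 \<Longrightarrow> size m = n \<Longrightarrow> l \<noteq> 0 \<Longrightarrow> FF n (image_mset (\<lambda>x. l * x + u) m) = FF n m"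
  unfolding FF_def by (simp add: coefvec_aff wclass_act)

lemma psi_orbit:
  assumes n: "n \<ge> 2" and m: "m \<in> DD n"
  shows "psi n (aff_orbit m) = FF n m"
proof -
  have "\<exists>m'. m' \<in> DD n \<and> aff_orbit m' = aff_orbit m" using m by blast
  then have "(SOME m'. m' \<in> DD n \<and> aff_orbit m' = aff_orbit m) \<in> DD n \<and>
             aff_orbit (SOME m'. m' \<in> DD n \<and> aff_orbit m' = aff_orbit m) = aff_orbit m"
    by (rule someI_ex)
  then obtain m' where m': "m' \<in> DD n" "aff_orbit m' = aff_orbit m"
    and eq: "psi n (aff_orbit m) = FF n m'" unfolding psi_def by blast
  obtain l u where "l \<noteq> 0" "m = image_mset (\<lambda>x. l * x + u) m'" using m'(2) orbit_eq_iff by blast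
  moreover have "size m' = n" using m' size_of_SP unfolding DD_def by auto
  ultimately show ?thesis using eq n FF_aff by simp
qed

lemma topspace_Q: "topspace (SP_orbits n) = aff_orbit ` DD n"
  unfolding SP_orbits_def topspace_quotient topspace_X ..

lemma cont_psi:
  assumes n: "n \<ge> 2"
  shows "continuous_map (SP_orbits n) (wproj (\<lambda>k. n - k) (n - 1)) (psi n)"
  unfolding SP_orbits_def
proof (rule continuous_map_quotient_from)
  show "continuous_map (SP_minus_diag n) (wproj (\<lambda>k. n - k) (n - 1)) (\<lambda>x. psi n (aff_orbit x))"
    by (rule continuous_map_eq[OF cont_FF[OF n]]) (simp add: topspace_X psi_orbit[OF n])
qed

lemma coefvec_ext: "coefvec n m \<in> extensional {..<n - 1}"
  unfolding coefvec_def by simp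

lemma FF_inj:
  assumes n: "n \<ge> 2" and m1: "m1 \<in> DD n" and m2: "m2 \<in> DD n" and eq: "FF n m1 = FF n m2"
  shows "aff_orbit m1 = aff_orbit m2"
proof -
  have s1: "size m1 = n" using m1 size_of_SP unfolding DD_def by auto
  have s2: "size m2 = n" using m2 size_of_SP unfolding DD_def by auto
  obtain t where t: "t \<noteq> 0" and cv: "coefvec n m2 = act (\<lambda>k. n - k) (n - 1) t (coefvec n m1)"
    using eq unfolding FF_def wclass_eq_iff[OF coefvec_ext coefvec_ext] by blast
  define c1 where "c1 = image_mset (\<lambda>x. x - bary n m1) m1"
  define c2 where "c2 = image_mset (\<lambda>x. x - bary n m2) m2"
  have p1: "centred_poly n m1 = (\<Prod>x\<in>#c1. [:- x, 1:])" unfolding c1_def centred_alt ..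
  have p2: "centred_poly n m2 = (\<Prod>x\<in>#c2. [:- x, 1:])" unfolding c2_def centred_alt ..
  have sc1: "size c1 = n" using s1 c1_def by simp
  have img: "(\<Prod>x\<in>#image_mset (\<lambda>x. t * x) c1. [:- x, 1:]) = (\<Prod>x\<in>#c1. [:t * (- x), 1:])"
    by (simp add: image_mset.compositionality o_def)
  have cf: "coeff (centred_poly n m2) k = coeff (\<Prod>x\<in>#image_mset (\<lambda>x. t * x) c1. [:- x, 1:]) k" for k
  proof -
    have "coeff (\<Prod>x\<in>#image_mset (\<lambda>x. t * x) c1. [:- x, 1:]) k = t ^ (n - k) * coeff (centred_poly n m1) k"
      unfolding img p1 using coeff_scale[of t "\<lambda>x. - x" c1 k] sc1 by simp
    also have "\<dots> = coeff (centred_poly n m2) k"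
      unfolding coeff_centred[OF s1 n] coeff_centred[OF s2 n] cv by (simp add: act_def)
    finally show ?thesis by simp
  qed
  have "centred_poly n m2 = (\<Prod>x\<in>#image_mset (\<lambda>x. t * x) c1. [:- x, 1:])"
    by (rule poly_eqI[OF cf])
  then have "c2 = image_mset (\<lambda>x. t * x) c1"
    unfolding p2 by (metis proots_prod_lin)
  then have "image_mset (\<lambda>x. x + bary n m2) c2 = image_mset (\<lambda>x. x + bary n m2) (image_mset (\<lambda>x. t * x) c1)"
    by simp
  then have "m2 = image_mset (\<lambda>x. t * x + (bary n m2 - t * bary n m1)) m1"
    unfolding c2_def c1_def recentre by (simp add: image_mset.compositionality o_def algebra_simps)
  then have "aff_orbit m2 = aff_orbit (image_mset (\<lambda>x. t * x + (bary n m2 - t * bary n m1)) m1)"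
    by (rule arg_cong)
  then show ?thesis unfolding aff_orbit_image[OF t] by simp
qed

lemma inj_psi:
  assumes n: "n \<ge> 2"
  shows "inj_on (psi n) (topspace (SP_orbits n))"
  unfolding topspace_Q
proof (rule inj_onI, elim imageE)
  fix O1 O2 m1 m2 assume h: "psi n O1 = psi n O2" "O1 = aff_orbit m1" "m1 \<in> DD n" "O2 = aff_orbit m2" "m2 \<in> DD n"
  then have "FF n m1 = FF n m2" using psi_orbit[OF n] by simp
  then show "O1 = O2" using FF_inj[OF n h(3) h(5)] h by simp
qed

lemma exists_preimage:
  assumes n: "n \<ge> 2" and a: "a \<in> topspace (ZZ n)"
  shows "\<exists>M \<in> DD n. coefvec n M = a"
proof -
  have aP: "a \<in> PiE {..<n - 1} (\<lambda>_. UNIV)" and a0: "a \<noteq> restrict (\<lambda>_. 0) {..<n - 1}"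
    using a unfolding topspace_ZZ by auto
  define p :: "complex poly" where "p = monom 1 n + (\<Sum>k<n - 1. monom (a k) k)"
  have cp: "coeff p k = (if k = n then 1 else if k < n - 1 then a k else 0)" for k
  proof -
    have "coeff (\<Sum>j<n - 1. monom (a j) j) k = (\<Sum>j<n - 1. if j = k then a j else 0)"
      by (simp add: coeff_sum coeff_monom)
    also have "\<dots> = (if k < n - 1 then a k else 0)" by (simp add: sum.delta)
    finally show ?thesis unfolding p_def using n by (auto simp: coeff_monom)
  qed
  have dp: "degree p = n"
  proof (rule antisym)
    show "degree p \<le> n" by (rule degree_le) (auto simp: cp)
    show "n \<le> degree p" by (rule le_degree) (simp add: cp)
  qed
  have lc: "lead_coeff p = 1" using dp cp by simp
  define M where "M = proots p"
  have pM: "p = (\<Prod>x\<in>#M. [:- x, 1:])"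
    using complex_poly_decompose_multiset[of p] lc unfolding M_def by simp
  have sM: "size M = n" unfolding M_def using dp size_proots_complex by simp
  then have "M \<noteq> {#}" using n by auto
  then obtain y M' where yM: "M = add_mset y M'" by (meson multiset_cases)
  have sM': "size M' = n - 1" using sM yM by simp
  have "coeff p (n - 1) = 0" using cp n by simp
  then have "- y + (\<Sum>x\<in>#M'. - x) = 0"
    using coeff_prod_lin_sub[of uminus y M'] pM yM sM' by simp
  then have "- (y + sum_mset M') = 0" by (simp add: sumneg)
  then have "sum_mset M = 0" using yM by (simp only: neg_equal_0_iff_equal sum_mset.add_mset)
  then have bM: "bary n M = 0" unfolding bary_def by simp
  have cpM: "centred_poly n M = p" unfolding centred_poly_def bM pM by simp
  have cvM: "coefvec n M = a"
  proof (rule ext)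
    fix k show "coefvec n M k = a k"
      using aP cp unfolding coefvec_def cpM by (auto simp: PiE_def extensional_def)
  qed
  have "M \<notin> diagonal n"
  proof
    assume "M \<in> diagonal n"
    then obtain c where c: "M = replicate_mset n c" unfolding diagonal_def by blast
    then have "of_nat n * c = 0" using \<open>sum_mset M = 0\<close> by simp
    then have "c = 0" using n by simp
    then have "p = [:0, 1:] ^ n" using pM c by simp
    moreover have "[:0, 1:] ^ n = (monom 1 n :: complex poly)" by (metis monom_altdef smult_1_left)
    ultimately have "coeff p k = 0" if "k < n - 1" for k using that by (simp add: coeff_monom)
    then have cz: "coeff p k = 0" if "k < n - 1" for k using that by blast
    have az: "a k = 0" if "k < n - 1" for k
    proof -
      have "k \<noteq> n" using that by simp
      then have "coeff p k = a k" using cp[of k] that by simp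
      then show ?thesis using cz[OF that] by simp
    qed
    have "a = restrict (\<lambda>_. 0) {..<n - 1}"
    proof (rule ext)
      fix k show "a k = restrict (\<lambda>_. 0) {..<n - 1} k"
        using aP az by (cases "k < n - 1") (auto simp: PiE_def extensional_def)
    qed
    then show False using a0 by simp
  qed
  moreover have "M \<in> topspace (SP n)" using mset_in_SP[OF sM] .
  ultimately show ?thesis using cvM unfolding DD_def by blast
qed

lemma surj_psi:
  assumes n: "n \<ge> 2"
  shows "psi n ` topspace (SP_orbits n) = topspace (wproj (\<lambda>k. n - k) (n - 1))"
  unfolding wproj_alt topspace_quotient topspace_Q
proof
  show "psi n ` aff_orbit ` DD n \<subseteq> wclass (\<lambda>k. n - k) (n - 1) ` topspace (ZZ n)"
    using psi_orbit[OF n] coefvec_in_ZZ[OF n] unfolding FF_def by auto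
  show "wclass (\<lambda>k. n - k) (n - 1) ` topspace (ZZ n) \<subseteq> psi n ` aff_orbit ` DD n"
  proof
    fix x assume "x \<in> wclass (\<lambda>k. n - k) (n - 1) ` topspace (ZZ n)"
    then obtain a where a: "a \<in> topspace (ZZ n)" "x = wclass (\<lambda>k. n - k) (n - 1) a" by blast
    obtain M where M: "M \<in> DD n" "coefvec n M = a" using exists_preimage[OF n a(1)] by blast
    have "x = psi n (aff_orbit M)" using psi_orbit[OF n M(1)] M(2) a(2) unfolding FF_def by simp
    then show "x \<in> psi n ` aff_orbit ` DD n" using M(1) by blast
  qed
qed

definition K0 :: "nat \<Rightarrow> (nat \<Rightarrow> complex) set" where
  "K0 n = {z \<in> topspace (Cn n). (\<Sum>i<n. z i) = 0 \<and> (\<Sum>i<n. (cmod (z i))\<^sup>2) = 1}"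

lemma K0_compact: "compactin (Cn n) (K0 n)"
proof (rule closed_compactin)
  show "compactin (Cn n) (PiE {..<n} (\<lambda>_. cball 0 1))"
    unfolding Cn_def compactin_PiE by (simp add: compactin_euclidean_iff)
  show "K0 n \<subseteq> PiE {..<n} (\<lambda>_. cball 0 1)"
  proof
    fix z assume z: "z \<in> K0 n"
    have "cmod (z i) \<le> 1" if "i < n" for i
    proof -
      have "(cmod (z i))\<^sup>2 \<le> (\<Sum>j<n. (cmod (z j))\<^sup>2)"
        using that by (intro member_le_sum) auto
      then have "(cmod (z i))\<^sup>2 \<le> 1" using z unfolding K0_def by simp
      then show ?thesis using power2_le_imp_le[of "cmod (z i)" 1] by simp
    qed
    then show "z \<in> PiE {..<n} (\<lambda>_. cball 0 1)" using z unfolding K0_def by (auto simp: topspace_Cn)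
  qed
  have c1: "continuous_map (Cn n) euclidean (\<lambda>z. (\<Sum>i<n. z i))"
    by (intro continuous_map_sum cont_proj) auto
  have c2: "continuous_map (Cn n) euclidean (\<lambda>z. (\<Sum>i<n. (cmod (z i))\<^sup>2))"
    by (intro continuous_map_sum continuous_map_real_pow continuous_map_norm cont_proj) auto
  have cl1: "closedin (Cn n) {z \<in> topspace (Cn n). (\<Sum>i<n. z i) \<in> {0}}"
    by (rule closedin_continuous_map_preimage[OF c1]) auto
  have cl2: "closedin (Cn n) {z \<in> topspace (Cn n). (\<Sum>i<n. (cmod (z i))\<^sup>2) \<in> {1}}"
    by (rule closedin_continuous_map_preimage[OF c2]) auto
  have "K0 n = {z \<in> topspace (Cn n). (\<Sum>i<n. z i) \<in> {0}} \<inter> {z \<in> topspace (Cn n). (\<Sum>i<n. (cmod (z i))\<^sup>2) \<in> {1}}"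
    unfolding K0_def by auto
  then show "closedin (Cn n) (K0 n)" using closedin_Int[OF cl1 cl2] by simp
qed

lemma K0_sub: "n > 0 \<Longrightarrow> K0 n \<subseteq> {z \<in> topspace (Cn n). mset_of n z \<in> DD n}"
proof
  fix z assume n: "n > 0" and z: "z \<in> K0 n"
  have zt: "z \<in> topspace (Cn n)" and s0: "(\<Sum>i<n. z i) = 0" and s1: "(\<Sum>i<n. (cmod (z i))\<^sup>2) = 1"
    using z unfolding K0_def by auto
  have "\<exists>i<n. z i \<noteq> z 0"
  proof (rule ccontr)
    assume "\<not> (\<exists>i<n. z i \<noteq> z 0)"
    then have all: "\<And>i. i < n \<Longrightarrow> z i = z 0" by blast
    have "(\<Sum>i<n. z i) = (\<Sum>i<n. z 0)" by (rule sum.cong[OF refl], rule all, simp)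
    then have "of_nat n * z 0 = 0" using s0 by simp
    then have z00: "z 0 = 0" using n by simp
    have "(\<Sum>i<n. (cmod (z i))\<^sup>2) = (\<Sum>i<n. (0::real))"
    proof (rule sum.cong[OF refl])
      fix i assume "i \<in> {..<n}" then have "z i = z 0" by (intro all) simp
      then show "(cmod (z i))\<^sup>2 = 0" using z00 by simp
    qed
    then show False using s1 by simp
  qed
  then obtain i where i: "i < n" "z i - z 0 \<in> - {0}" by auto
  show "z \<in> {z \<in> topspace (Cn n). mset_of n z \<in> DD n}"
    unfolding preimage_DD[OF n] using zt i by blast
qed

lemma cont_mset_of_X:
  "continuous_map (subtopology (Cn n) {z \<in> topspace (Cn n). mset_of n z \<in> DD n}) (SP_minus_diag n) (mset_of n)"
  unfolding X_alt
proof (rule continuous_map_into_subtopology)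
  show "continuous_map (subtopology (Cn n) {z \<in> topspace (Cn n). mset_of n z \<in> DD n}) (SP n) (mset_of n)"
    unfolding SP_def by (rule continuous_map_from_subtopology[OF continuous_map_quotient_into])
qed auto

lemma mset_of_restrict: "mset_of n (restrict f {..<n}) = mset_of n f"
  unfolding mset_of_image by (rule image_mset_cong) auto

lemma mset_of_aff: "mset_of n (\<lambda>i. l * z i + u) = image_mset (\<lambda>x. l * x + u) (mset_of n z)"
  unfolding mset_of_image by (simp add: image_mset.compositionality o_def)

lemma orbit_meets_K0:
  assumes n: "n > 0" and m: "m \<in> DD n"
  shows "\<exists>z \<in> K0 n. aff_orbit (mset_of n z) = aff_orbit m"
proof -
  obtain z where z: "z \<in> topspace (Cn n)" "m = mset_of n z"
    using m unfolding DD_def topspace_SP topspace_Cn by auto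
  have zD: "mset_of n z \<in> DD n" using m z by simp
  have "z \<in> {z \<in> topspace (Cn n). mset_of n z \<in> DD n}" using zD z(1) by blast
  then have "z \<in> (\<Union>i\<in>{..<n}. {z \<in> topspace (Cn n). z i - z 0 \<in> - {0}})" unfolding preimage_DD[OF n] .
  then obtain i where i: "i < n" "z i \<noteq> z 0" by auto
  define B where "B = (\<Sum>j<n. z j) / of_nat n"
  define s where "s = sqrt (\<Sum>j<n. (cmod (z j - B))\<^sup>2)"
  have "z i - B \<noteq> 0 \<or> z 0 - B \<noteq> 0" using i by auto
  then obtain j where j: "j < n" "z j - B \<noteq> 0" using i n by blast
  have "0 < (cmod (z j - B))\<^sup>2" using j by simp
  also have "\<dots> \<le> (\<Sum>j<n. (cmod (z j - B))\<^sup>2)" using j by (intro member_le_sum) auto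
  finally have pos: "0 < (\<Sum>j<n. (cmod (z j - B))\<^sup>2)" .
  then have s0: "s > 0" unfolding s_def by simp
  define z' where "z' = restrict (\<lambda>i. (1 / of_real s) * z i + (- B / of_real s)) {..<n}"
  have "mset_of n z' = image_mset (\<lambda>x. (1 / of_real s) * x + (- B / of_real s)) (mset_of n z)"
    unfolding z'_def mset_of_restrict mset_of_aff ..
  moreover have "1 / complex_of_real s \<noteq> 0" using s0 by simp
  ultimately have orb: "aff_orbit (mset_of n z') = aff_orbit m"
    using z(2) aff_orbit_image by metis
  have "(\<Sum>i<n. z' i) = (\<Sum>i<n. (z i - B) / of_real s)"
    unfolding z'_def by (intro sum.cong) (auto simp: diff_divide_distrib)
  also have "\<dots> = ((\<Sum>i<n. z i) - of_nat n * B) / of_real s"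
    by (simp add: sum_divide_distrib[symmetric] sum_subtractf)
  also have "\<dots> = 0" unfolding B_def using n by simp
  finally have sum0: "(\<Sum>i<n. z' i) = 0" .
  have "(\<Sum>i<n. (cmod (z' i))\<^sup>2) = (\<Sum>i<n. (cmod (z i - B))\<^sup>2 / s\<^sup>2)"
  proof (intro sum.cong refl)
    fix i assume "i \<in> {..<n}"
    then have "z' i = (z i - B) / of_real s" unfolding z'_def using s0 by (simp add: field_simps)
    then have "cmod (z' i) = cmod (z i - B) / s" using s0 by (simp add: norm_divide)
    then show "(cmod (z' i))\<^sup>2 = (cmod (z i - B))\<^sup>2 / s\<^sup>2" by (simp add: power_divide)
  qed
  also have "\<dots> = (\<Sum>i<n. (cmod (z i - B))\<^sup>2) / s\<^sup>2" by (simp add: sum_divide_distrib)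
  also have "\<dots> = 1" unfolding s_def using pos by simp
  finally have sq1: "(\<Sum>i<n. (cmod (z' i))\<^sup>2) = 1" .
  have "z' \<in> K0 n" unfolding K0_def topspace_Cn using sum0 sq1 z'_def by auto
  then show ?thesis using orb by blast
qed

lemma compact_Q:
  assumes n: "n > 0"
  shows "compact_space (SP_orbits n)"
proof -
  have "compactin (subtopology (Cn n) {z \<in> topspace (Cn n). mset_of n z \<in> DD n}) (K0 n)"
    unfolding compactin_subtopology using K0_compact K0_sub[OF n] by simp
  then have "compactin (SP_minus_diag n) (mset_of n ` K0 n)"
    by (rule image_compactin[OF _ cont_mset_of_X])
  then have "compactin (SP_orbits n) (aff_orbit ` mset_of n ` K0 n)"
    unfolding SP_orbits_def by (rule image_compactin[OF _ continuous_map_quotient_into])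
  moreover have "aff_orbit ` mset_of n ` K0 n = topspace (SP_orbits n)"
  proof
    show "aff_orbit ` mset_of n ` K0 n \<subseteq> topspace (SP_orbits n)"
      unfolding topspace_Q using K0_sub[OF n] by auto
    show "topspace (SP_orbits n) \<subseteq> aff_orbit ` mset_of n ` K0 n"
      unfolding topspace_Q
    proof
      fix Orb assume "Orb \<in> aff_orbit ` DD n"
      then obtain m where m: "m \<in> DD n" "Orb = aff_orbit m" by blast
      obtain z where "z \<in> K0 n" "aff_orbit (mset_of n z) = aff_orbit m" using orbit_meets_K0[OF n m(1)] by blast
      then show "Orb \<in> aff_orbit ` mset_of n ` K0 n" using m(2) by (metis imageI)
    qed
  qed
  ultimately show ?thesis unfolding compact_space_def by simp
qed

definition ZG :: "nat \<Rightarrow> (nat \<Rightarrow> complex) topology" where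
  "ZG N = subtopology (Cn N) (topspace (Cn N) - {restrict (\<lambda>_. 0) {..<N}})"

lemma topspace_ZG: "topspace (ZG N) = PiE {..<N} (\<lambda>_. UNIV) - {restrict (\<lambda>_. 0) {..<N}}"
  unfolding ZG_def by (auto simp: topspace_Cn)

definition rho :: "(nat \<Rightarrow> nat) \<Rightarrow> nat \<Rightarrow> (nat \<Rightarrow> complex) \<Rightarrow> real" where
  "rho w N x = (\<Sum>k<N. root (w k) (cmod (x k)))"

definition nrm :: "(nat \<Rightarrow> nat) \<Rightarrow> nat \<Rightarrow> (nat \<Rightarrow> complex) \<Rightarrow> nat \<Rightarrow> complex" where
  "nrm w N x = act w N (of_real (1 / rho w N x)) x"

definition dd :: "nat \<Rightarrow> (nat \<Rightarrow> complex) \<Rightarrow> (nat \<Rightarrow> complex) \<Rightarrow> real" where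
  "dd N x y = (\<Sum>k<N. cmod (x k - y k))"

lemma ZG_nz:
  assumes "x \<in> topspace (ZG N)"
  shows "\<exists>k<N. x k \<noteq> 0"
proof (rule ccontr)
  assume "\<not> (\<exists>k<N. x k \<noteq> 0)"
  then have "x = restrict (\<lambda>_. 0) {..<N}" using assms unfolding topspace_ZG
    by (auto simp: PiE_def extensional_def fun_eq_iff)
  then show False using assms unfolding topspace_ZG by simp
qed

lemma ZG_ext: "x \<in> topspace (ZG N) \<Longrightarrow> x \<in> extensional {..<N}"
  unfolding topspace_ZG by (auto simp: PiE_def)

lemma rho_pos:
  assumes wpos: "\<And>k. k < N \<Longrightarrow> w k > 0" and x: "x \<in> topspace (ZG N)"
  shows "rho w N x > 0"
proof -
  obtain k where k: "k < N" "x k \<noteq> 0" using ZG_nz[OF x] by blast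
  show ?thesis unfolding rho_def
  proof (rule sum_pos2[of _ k])
    show "0 < root (w k) (cmod (x k))" using k wpos[of k] by simp
    show "0 \<le> root (w i) (cmod (x i))" if "i \<in> {..<N}" for i using that wpos[of i] by simp
  qed (use k in auto)
qed

lemma rho_act:
  assumes wpos: "\<And>k. k < N \<Longrightarrow> w k > 0"
  shows "rho w N (act w N t x) = cmod t * rho w N x"
  unfolding rho_def sum_distrib_left
proof (rule sum.cong[OF refl])
  fix k assume k: "k \<in> {..<N}"
  then have "act w N t x k = t ^ w k * x k" unfolding act_def by simp
  then have "root (w k) (cmod (act w N t x k)) = root (w k) (cmod t ^ w k) * root (w k) (cmod (x k))"
    by (simp add: norm_mult norm_power real_root_mult)
  also have "root (w k) (cmod t ^ w k) = cmod t" using wpos[of k] k by (simp add: real_root_power_cancel)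
  finally show "root (w k) (cmod (act w N t x k)) = cmod t * root (w k) (cmod (x k))" .
qed

lemma nrm_act:
  assumes wpos: "\<And>k. k < N \<Longrightarrow> w k > 0" and x: "x \<in> topspace (ZG N)" and t: "t \<noteq> 0"
  shows "nrm w N (act w N t x) = act w N (t / of_real (cmod t)) (nrm w N x)"
proof -
  have r: "rho w N x > 0" using rho_pos[OF wpos x] .
  have "of_real (1 / (cmod t * rho w N x)) * t = t / of_real (cmod t) * of_real (1 / rho w N x)"
    using r t by (simp add: field_simps)
  moreover have r2: "rho w N (act w N t x) = cmod t * rho w N x" by (rule rho_act[OF wpos])
  moreover have "nrm w N (act w N t x) = act w N (of_real (1 / (cmod t * rho w N x)) * t) x"
    unfolding nrm_def act_act r2 ..
  moreover have "act w N (t / of_real (cmod t)) (nrm w N x) = act w N (t / of_real (cmod t) * of_real (1 / rho w N x)) x"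
    unfolding nrm_def act_act ..
  ultimately show ?thesis by simp
qed

lemma dd_act_unit:
  assumes "cmod u = 1"
  shows "dd N (act w N u x) (act w N u y) = dd N x y"
  unfolding dd_def
proof (rule sum.cong[OF refl])
  fix k assume "k \<in> {..<N}"
  then have "act w N u x k - act w N u y k = u ^ w k * (x k - y k)" unfolding act_def by (simp add: algebra_simps)
  then show "cmod (act w N u x k - act w N u y k) = cmod (x k - y k)" using assms by (simp add: norm_mult norm_power)
qed

lemma dd_sym: "dd N x y = dd N y x"
  unfolding dd_def by (simp add: norm_minus_commute)

lemma dd_tri: "dd N x z \<le> dd N x y + dd N y z"
  unfolding dd_def sum.distrib[symmetric]
proof (rule sum_mono)
  fix k show "cmod (x k - z k) \<le> cmod (x k - y k) + cmod (y k - z k)"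
    using norm_triangle_ineq[of "x k - y k" "y k - z k"] by simp
qed

lemma dd_self: "dd N x x = 0"
  unfolding dd_def by simp

lemma dd_pos:
  assumes "x \<in> extensional {..<N}" "y \<in> extensional {..<N}" "x \<noteq> y"
  shows "dd N x y > 0"
proof -
  obtain k where k0: "x k \<noteq> y k" using assms(3) by (auto simp: fun_eq_iff)
  have "k < N"
  proof (rule ccontr)
    assume "\<not> k < N"
    then have "x k = undefined" "y k = undefined" using assms(1,2) by (auto simp: extensional_def)
    then show False using k0 by simp
  qed
  with k0 have k: "k < N" "x k \<noteq> y k" by auto
  show ?thesis unfolding dd_def
    by (rule sum_pos2[of _ k]) (use k in auto)
qed

lemma cm_root: "continuous_map X euclidean f \<Longrightarrow> continuous_map X euclidean (\<lambda>x. root m (f x))"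
  by (simp add: continuous_map_atin tendsto_real_root)

lemma cm_of_real: "continuous_map X euclidean f \<Longrightarrow> continuous_map X euclidean (\<lambda>x. complex_of_real (f x))"
  by (simp add: continuous_map_atin tendsto_of_real)

lemma cm_cpow: "continuous_map X euclidean f \<Longrightarrow> continuous_map X euclidean (\<lambda>x. (f x :: complex) ^ m)"
  by (simp add: continuous_map_atin tendsto_power)

lemma cont_projZ: "k < N \<Longrightarrow> continuous_map (ZG N) euclidean (\<lambda>x. x k)"
  unfolding ZG_def by (rule continuous_map_from_subtopology[OF cont_proj])

lemma cont_rho: "continuous_map (ZG N) euclidean (rho w N)"
  unfolding rho_def
  by (intro continuous_map_sum cm_root continuous_map_norm cont_projZ) auto

lemma cont_nrm:
  assumes wpos: "\<And>k. k < N \<Longrightarrow> w k > 0" and k: "k < N"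
  shows "continuous_map (ZG N) euclidean (\<lambda>x. nrm w N x k)"
proof -
  have "continuous_map (ZG N) euclidean (\<lambda>x. 1 / rho w N x)"
  proof (rule continuous_map_real_divide[OF _ cont_rho])
    show "rho w N x \<noteq> 0" if "x \<in> topspace (ZG N)" for x using rho_pos[of N w x, OF wpos that] by simp
  qed simp
  then have "continuous_map (ZG N) euclidean (\<lambda>x. (of_real (1 / rho w N x)) ^ w k * x k)"
    by (intro cmult cm_cpow cm_of_real cont_projZ k)
  then show ?thesis unfolding nrm_def act_def using k by simp
qed

lemma cont_dd_nrm:
  assumes wpos: "\<And>k. k < N \<Longrightarrow> w k > 0"
  shows "continuous_map (ZG N) euclidean (\<lambda>x. dd N (nrm w N x) c)"
  unfolding dd_def
  by (intro continuous_map_sum continuous_map_norm continuous_map_diff cont_nrm[OF wpos]) auto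

lemma act_in_ZG:
  assumes x: "x \<in> topspace (ZG N)" and t: "t \<noteq> 0"
  shows "act w N t x \<in> topspace (ZG N)"
proof -
  have "act w N t x \<noteq> restrict (\<lambda>_. 0) {..<N}"
  proof
    assume h: "act w N t x = restrict (\<lambda>_. 0) {..<N}"
    have "x = act w N (1 / t) (act w N t x)" using t act_one[OF ZG_ext[OF x]] by (simp add: act_act)
    also have "\<dots> = act w N (1 / t) (restrict (\<lambda>_. 0) {..<N})" using h by simp
    also have "\<dots> = restrict (\<lambda>_. 0) {..<N}" by (auto simp: act_def)
    finally show False using x unfolding topspace_ZG by simp
  qed
  then show ?thesis unfolding topspace_ZG act_def by auto
qed

lemma cont_act:
  assumes t: "t \<noteq> 0"
  shows "continuous_map (ZG N) (ZG N) (act w N t)"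
proof -
  have "continuous_map (ZG N) (Cn N) (act w N t)"
    unfolding Cn_def continuous_map_componentwise
  proof (intro conjI ballI)
    show "act w N t ` topspace (ZG N) \<subseteq> extensional {..<N}" using act_ext by blast
    fix k assume k: "k \<in> {..<N}"
    have "continuous_map (ZG N) euclidean (\<lambda>x. t ^ w k * x k)"
      using k by (intro cmult cont_projZ) auto
    then show "continuous_map (ZG N) euclidean (\<lambda>x. act w N t x k)"
      unfolding act_def using k by simp
  qed
  then have "continuous_map (ZG N) (subtopology (Cn N) (topspace (Cn N) - {restrict (\<lambda>_. 0) {..<N}})) (act w N t)"
  proof (rule continuous_map_into_subtopology)
    show "act w N t \<in> topspace (ZG N) \<rightarrow> topspace (Cn N) - {restrict (\<lambda>_. 0) {..<N}}"
      using act_in_ZG[OF _ t] unfolding topspace_ZG topspace_Cn by blast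
  qed
  then show ?thesis by (simp only: ZG_def[symmetric])
qed

lemma open_map_wclass:
  assumes U: "openin (ZG N) U"
  shows "openin (quotient_topology (ZG N) (wclass w N)) (wclass w N ` U)"
  unfolding openin_quotient_topology
proof
  have Usub: "U \<subseteq> topspace (ZG N)" using openin_subset[OF U] .
  then show "wclass w N ` U \<subseteq> wclass w N ` topspace (ZG N)" by blast
  have eq: "{x \<in> topspace (ZG N). wclass w N x \<in> wclass w N ` U}
      = (\<Union>t\<in>-{0}. {x \<in> topspace (ZG N). act w N t x \<in> U})"
  proof (intro set_eqI iffI)
    fix x assume "x \<in> {x \<in> topspace (ZG N). wclass w N x \<in> wclass w N ` U}"
    then obtain y where x: "x \<in> topspace (ZG N)" and y: "y \<in> U" "wclass w N x = wclass w N y" by blast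
    then obtain t where "t \<noteq> 0" "y = act w N t x"
      using wclass_eq_iff[OF ZG_ext[OF x] ZG_ext] Usub by blast
    then show "x \<in> (\<Union>t\<in>-{0}. {x \<in> topspace (ZG N). act w N t x \<in> U})" using x y by blast
  next
    fix x assume "x \<in> (\<Union>t\<in>-{0}. {x \<in> topspace (ZG N). act w N t x \<in> U})"
    then obtain t where t: "t \<noteq> 0" and x: "x \<in> topspace (ZG N)" "act w N t x \<in> U" by blast
    have "wclass w N x = wclass w N (act w N t x)" using wclass_act[OF t] by simp
    then show "x \<in> {x \<in> topspace (ZG N). wclass w N x \<in> wclass w N ` U}" using x by blast
  qed
  show "openin (ZG N) {x \<in> topspace (ZG N). wclass w N x \<in> wclass w N ` U}"
    unfolding eq
  proof (intro openin_Union ballI, elim imageE)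
    fix S t assume "S = {x \<in> topspace (ZG N). act w N t x \<in> U}" "t \<in> - {0}"
    then show "openin (ZG N) S" using openin_continuous_map_preimage[OF cont_act U] by simp
  qed
qed

lemma nrm_ext: "nrm w N x \<in> extensional {..<N}"
  unfolding nrm_def by (rule act_ext)

lemma nrm_back:
  assumes wpos: "\<And>k. k < N \<Longrightarrow> w k > 0" and x: "x \<in> topspace (ZG N)"
  shows "x = act w N (of_real (rho w N x)) (nrm w N x)"
proof -
  have r: "rho w N x > 0" using rho_pos[OF wpos x] .
  have "act w N (of_real (rho w N x)) (nrm w N x) = act w N (of_real (rho w N x) * of_real (1 / rho w N x)) x"
    unfolding nrm_def act_act ..
  also have "of_real (rho w N x) * of_real (1 / rho w N x) = (1::complex)" using r by simp
  finally show ?thesis using act_one[OF ZG_ext[OF x]] by simp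
qed

lemma Hausdorff_wq:
  assumes wpos: "\<And>k. k < N \<Longrightarrow> w k > 0"
  shows "Hausdorff_space (quotient_topology (ZG N) (wclass w N))"
  unfolding Hausdorff_space_def topspace_quotient
proof (intro allI impI, elim conjE imageE)
  fix p q a b assume pq: "p \<noteq> q" and p: "p = wclass w N a" and a: "a \<in> topspace (ZG N)"
    and q: "q = wclass w N b" and b: "b \<in> topspace (ZG N)"
  define ah where "ah = nrm w N a"
  define bh where "bh = nrm w N b"
  have ra: "rho w N a > 0" using rho_pos[OF wpos a] .
  have rb: "rho w N b > 0" using rho_pos[OF wpos b] .
  have ne: "act w N u ah \<noteq> bh" if u: "cmod u = 1" for u
  proof
    assume h: "act w N u ah = bh"
    have "b = act w N (of_real (rho w N b)) bh" unfolding bh_def by (rule nrm_back[OF wpos b])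
    also have "\<dots> = act w N (of_real (rho w N b) * u * of_real (1 / rho w N a)) a"
      unfolding h[symmetric] ah_def nrm_def act_act by (simp add: mult.assoc)
    finally have "b = act w N (of_real (rho w N b) * u * of_real (1 / rho w N a)) a" .
    moreover have "of_real (rho w N b) * u * of_real (1 / rho w N a) \<noteq> 0" using ra rb u by auto
    ultimately have "wclass w N b = wclass w N a" using wclass_act by metis
    then show False using pq p q by simp
  qed
  define f where "f u = dd N (act w N u ah) bh" for u
  have f_alt: "f u = (\<Sum>k<N. cmod (u ^ w k * ah k - bh k))" for u
    unfolding f_def dd_def by (intro sum.cong) (auto simp: act_def)
  have fc: "continuous_on (sphere 0 1) f"
    unfolding f_alt[abs_def] by (intro continuous_intros)
  obtain u0 where u0: "u0 \<in> sphere 0 1" and u0min: "\<And>u. u \<in> sphere 0 1 \<Longrightarrow> f u0 \<le> f u"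
    using continuous_attains_inf[OF compact_sphere _ fc] by (metis empty_iff mem_sphere_0 norm_one)
  define \<delta> where "\<delta> = f u0"
  have "cmod u0 = 1" using u0 by simp
  then have dpos: "\<delta> > 0" unfolding \<delta>_def f_def
    using dd_pos[OF act_ext _ ne] bh_def nrm_ext by blast
  define U where "U = {x \<in> topspace (ZG N). dd N (nrm w N x) ah \<in> {..<\<delta>/2}}"
  define V where "V = {x \<in> topspace (ZG N). dd N (nrm w N x) bh \<in> {..<\<delta>/2}}"
  have oI: "openin euclidean {..<\<delta>/2}" by (metis open_lessThan open_openin)
  have oU: "openin (ZG N) U" unfolding U_def by (rule openin_continuous_map_preimage[OF cont_dd_nrm[OF wpos] oI])
  have oV: "openin (ZG N) V" unfolding V_def by (rule openin_continuous_map_preimage[OF cont_dd_nrm[OF wpos] oI])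
  have aU: "a \<in> U" unfolding U_def using a dpos by (simp add: ah_def dd_self)
  have bV: "b \<in> V" unfolding V_def using b dpos by (simp add: bh_def dd_self)
  have disj: "disjnt (wclass w N ` U) (wclass w N ` V)"
    unfolding disjnt_iff
  proof (intro allI notI, elim conjE imageE)
    fix r x y assume xU: "x \<in> U" and yV: "y \<in> V" and rx: "r = wclass w N x" and ry: "r = wclass w N y"
    have x: "x \<in> topspace (ZG N)" using xU unfolding U_def by blast
    have y: "y \<in> topspace (ZG N)" using yV unfolding V_def by blast
    obtain t where t: "t \<noteq> 0" and yt: "y = act w N t x"
      using wclass_eq_iff[OF ZG_ext[OF x] ZG_ext[OF y]] rx ry by blast
    define u where "u = t / of_real (cmod t)"
    have cu: "cmod u = 1" unfolding u_def using t by (simp add: norm_divide)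
    have ny: "nrm w N y = act w N u (nrm w N x)" unfolding yt u_def by (rule nrm_act[OF wpos x t])
    have "f u \<le> dd N (act w N u ah) (act w N u (nrm w N x)) + dd N (act w N u (nrm w N x)) bh"
      unfolding f_def by (rule dd_tri)
    also have "\<dots> = dd N (nrm w N x) ah + dd N (nrm w N y) bh"
      unfolding dd_act_unit[OF cu] ny by (simp add: dd_sym)
    also have "\<dots> < \<delta>" using xU yV unfolding U_def V_def by simp
    finally have "f u < \<delta>" .
    moreover have "\<delta> \<le> f u" unfolding \<delta>_def using u0min cu by simp
    ultimately show False by simp
  qed
  show "\<exists>U V. openin (quotient_topology (ZG N) (wclass w N)) U \<and> openin (quotient_topology (ZG N) (wclass w N)) V \<and>
              p \<in> U \<and> q \<in> V \<and> disjnt U V"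
    using open_map_wclass[OF oU] open_map_wclass[OF oV] aU bV disj p q by blast
qed

theorem mainTheorem3:
  fixes n :: nat
  assumes "n \<ge> 2"
  shows "\<exists>\<psi>. (\<forall>m \<in> topspace (SP_minus_diag n).
                 \<psi> (aff_orbit m) = wclass (\<lambda>k. n - k) (n - 1) (coefvec n m))
           \<and> homeomorphic_map (SP_orbits n) (wproj (\<lambda>k. n - k) (n - 1)) \<psi>"
proof -
  have n: "n \<ge> 2" using assms .
  have n0: "n > 0" using n by simp
  have wpos: "\<And>k. k < n - 1 \<Longrightarrow> (\<lambda>k. n - k) k > 0" by simp
  have "ZZ n = ZG (n - 1)" unfolding ZZ_def ZG_def ..
  then have H: "Hausdorff_space (wproj (\<lambda>k. n - k) (n - 1))"
    unfolding wproj_alt using Hausdorff_wq[OF wpos] by simp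
  have cont: "continuous_map (SP_orbits n) (wproj (\<lambda>k. n - k) (n - 1)) (psi n)" by (rule cont_psi[OF n])
  have closed: "closed_map (SP_orbits n) (wproj (\<lambda>k. n - k) (n - 1)) (psi n)"
    by (rule continuous_imp_closed_map[OF cont compact_Q[OF n0] H])
  have homeo: "homeomorphic_map (SP_orbits n) (wproj (\<lambda>k. n - k) (n - 1)) (psi n)"
    by (rule bijective_closed_imp_homeomorphic_map[OF cont closed surj_psi[OF n] inj_psi[OF n]])
  have "\<forall>m \<in> topspace (SP_minus_diag n). psi n (aff_orbit m) = wclass (\<lambda>k. n - k) (n - 1) (coefvec n m)"
    unfolding topspace_X using psi_orbit[OF n] unfolding FF_def by blast
  then show ?thesis using homeo by blast
qed

end
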